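(* Each of the matroids $Q_6$, $P_6$ and $U_{3,6}$ is an excluded minor for the class $\mathcal{Z}$.
   Context: $\mathcal{Z}$ is the class of matroids $M$ such that for every $e\in E(M)$, $M\backslash e$ or $M/e$ is binary. $P_6$ is the six-element rank-3 matroid whose only non-spanning circuit is a single triangle. $Q_6$ is the six-element rank-3 matroid whose non-spanning circuits are exactly two triangles sharing one element. An excluded minor for a minor-closed class is a matroid not in the class all of whose proper minors are in the class. *)

theory Defs
  imports Main "HOL-Library.Z2"
begin

type_synonym 'a matroid = "'a set \<times> ('a set \<Rightarrow> bool)"

definition matroid :: "'a matroid \<Rightarrow> bool" where
  "matroid M \<longleftrightarrow> (let E = fst M; indep = snd M in
     finite E \<and>
     (\<forall>X. indep X \<longrightarrow> X \<subseteq> E) \<and>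
     indep {} \<and>
     (\<forall>X Y. indep Y \<and> X \<subseteq> Y \<longrightarrow> indep X) \<and>
     (\<forall>X Y. indep X \<and> indep Y \<and> card X < card Y \<longrightarrow> (\<exists>y\<in>Y - X. indep (insert y X))))"

definition basis_of :: "('a set \<Rightarrow> bool) \<Rightarrow> 'a set \<Rightarrow> 'a set \<Rightarrow> bool" where
  "basis_of indep B C \<longleftrightarrow> B \<subseteq> C \<and> indep B \<and> (\<forall>x\<in>C - B. \<not> indep (insert x B))"

definition delete :: "'a matroid \<Rightarrow> 'a set \<Rightarrow> 'a matroid" where
  "delete M D = (fst M - D, \<lambda>X. X \<subseteq> fst M - D \<and> snd M X)"

definition contract :: "'a matroid \<Rightarrow> 'a set \<Rightarrow> 'a matroid" where
  "contract M C = (fst M - C,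
     \<lambda>X. X \<subseteq> fst M - C \<and> (\<exists>B. basis_of (snd M) B (C \<inter> fst M) \<and> snd M (X \<union> B)))"

definition proper_minor :: "'a matroid \<Rightarrow> 'a matroid \<Rightarrow> bool" where
  "proper_minor N M \<longleftrightarrow> (\<exists>C D. C \<subseteq> fst M \<and> D \<subseteq> fst M \<and> C \<inter> D = {} \<and> C \<union> D \<noteq> {} \<and>
      N = contract (delete M D) C)"

definition gf2_lin_indep :: "('a \<Rightarrow> nat \<Rightarrow> bit) \<Rightarrow> 'a set \<Rightarrow> bool" where
  "gf2_lin_indep phi X \<longleftrightarrow>
     (\<forall>c :: 'a \<Rightarrow> bit. (\<forall>i. (\<Sum>x\<in>X. c x * phi x i) = 0) \<longrightarrow> (\<forall>x\<in>X. c x = 0))"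

definition binary :: "'a matroid \<Rightarrow> bool" where
  "binary M \<longleftrightarrow> (\<exists>phi :: 'a \<Rightarrow> nat \<Rightarrow> bit. \<forall>X \<subseteq> fst M. snd M X \<longleftrightarrow> gf2_lin_indep phi X)"

definition in_Z :: "'a matroid \<Rightarrow> bool" where
  "in_Z M \<longleftrightarrow> (\<forall>e\<in>fst M. binary (delete M {e}) \<or> binary (contract M {e}))"

definition excluded_minor_Z :: "'a matroid \<Rightarrow> bool" where
  "excluded_minor_Z M \<longleftrightarrow> matroid M \<and> \<not> in_Z M \<and> (\<forall>N. proper_minor N M \<longrightarrow> in_Z N)"

definition U36 :: "nat matroid" where
  "U36 = ({0..5}, \<lambda>X. X \<subseteq> {0..5} \<and> card X \<le> 3)"

definition P6 :: "nat matroid" where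
  "P6 = ({0..5}, \<lambda>X. X \<subseteq> {0..5} \<and> card X \<le> 3 \<and> X \<noteq> {0,1,2})"

definition Q6 :: "nat matroid" where
  "Q6 = ({0..5}, \<lambda>X. X \<subseteq> {0..5} \<and> card X \<le> 3 \<and> X \<noteq> {0,1,2} \<and> X \<noteq> {2,3,4})"

end

theory Submission
  imports Defs
begin


lemma bit_cases01: "(b::bit) = 0 \<or> b = 1"
  by (cases "b = 0") auto

lemma bit_add_self: "(b::bit) + b = 0"
  using bit_cases01[of b] by auto

lemma sum_ind:
  fixes f :: "'a \<Rightarrow> bit"
  assumes "finite X" "A \<subseteq> X"
  shows "(\<Sum>z\<in>X. (if z \<in> A then 1 else 0) * f z) = (\<Sum>z\<in>A. f z)"
proof -
  have "(\<Sum>z\<in>X. (if z \<in> A then 1 else 0) * f z) = (\<Sum>z\<in>X. if z \<in> A then f z else 0)"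
    by (rule sum.cong) auto
  also have "\<dots> = sum f (X \<inter> A)" using sum.inter_restrict[OF assms(1), of f A] by simp
  also have "X \<inter> A = A" using assms(2) by auto
  finally show ?thesis .
qed

lemma gf2_dep:
  assumes "finite X" "A \<subseteq> X" "A \<noteq> {}" "\<And>i. (\<Sum>z\<in>A. phi z i) = 0"
  shows "\<not> gf2_lin_indep phi X"
proof
  assume g: "gf2_lin_indep phi X"
  let ?c = "\<lambda>z. if z \<in> A then (1::bit) else 0"
  have "\<forall>i. (\<Sum>x\<in>X. ?c x * phi x i) = 0"
    using sum_ind[OF assms(1,2)] assms(4) by simp
  then have "\<forall>x\<in>X. ?c x = 0" using g[unfolded gf2_lin_indep_def, rule_format, of ?c] by blast
  moreover obtain a where "a \<in> A" using assms(3) by blast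
  ultimately have "(1::bit) = 0" using assms(2) by (metis subsetD)
  then show False by simp
qed

lemma gf2_pair:
  assumes "gf2_lin_indep phi {x,y}" "x \<noteq> y"
  shows "phi x \<noteq> phi y"
proof
  assume e: "phi x = phi y"
  have "\<And>i. (\<Sum>z\<in>{x,y}. phi z i) = 0" using assms(2) e by (simp add: bit_add_self)
  from gf2_dep[OF _ _ _ this] assms(1) show False by auto
qed

lemma gf2_empty: "gf2_lin_indep phi {}"
  unfolding gf2_lin_indep_def by simp

lemma gf2_single: "gf2_lin_indep phi {x} \<longleftrightarrow> phi x \<noteq> (\<lambda>i. 0)"
proof
  assume "gf2_lin_indep phi {x}"
  then show "phi x \<noteq> (\<lambda>i. 0)" using gf2_dep[of "{x}" "{x}" phi] by auto
next
  assume h: "phi x \<noteq> (\<lambda>i. 0)"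
  have "\<exists>i. phi x i \<noteq> 0" using h by (auto simp: fun_eq_iff)
  then obtain i where i: "phi x i \<noteq> 0" by blast
  show "gf2_lin_indep phi {x}" unfolding gf2_lin_indep_def
  proof (intro allI impI)
    fix c :: "'a \<Rightarrow> bit" assume "\<forall>i. (\<Sum>x\<in>{x}. c x * phi x i) = 0"
    then have "c x * phi x i = 0" by (metis sum.empty sum.insert finite.emptyI empty_iff add.right_neutral)
    with i show "\<forall>x\<in>{x}. c x = 0" by simp
  qed
qed

lemma binary_rank1:
  assumes fin: "finite S" and J0: "J {}" and Jc: "\<And>X. X \<subseteq> S \<Longrightarrow> J X \<Longrightarrow> card X \<le> 1"
  shows "binary (S, J)"
proof -
  define phi where "phi x i = (if i = (0::nat) \<and> J {x} then (1::bit) else 0)" for x i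
  have "\<forall>X\<subseteq>S. J X \<longleftrightarrow> gf2_lin_indep phi X"
  proof (intro allI impI)
    fix X assume XS: "X \<subseteq> S"
    then have fX: "finite X" using fin finite_subset by blast
    show "J X \<longleftrightarrow> gf2_lin_indep phi X"
    proof (cases "card X \<le> 1")
      case True
      then have "X = {} \<or> (\<exists>x. X = {x})" using fX by (cases "card X") (auto simp: card_Suc_eq)
      then show ?thesis
      proof
        assume "X = {}" then show ?thesis using J0 gf2_empty by simp
      next
        assume "\<exists>x. X = {x}"
        then obtain x where X: "X = {x}" by blast
        have "phi x \<noteq> (\<lambda>i. 0) \<longleftrightarrow> J {x}"
        proof
          assume "phi x \<noteq> (\<lambda>i. 0)" then show "J {x}" unfolding phi_def by (auto split: if_splits)
        next
          assume "J {x}" then have "phi x 0 = 1" unfolding phi_def by simp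
          then show "phi x \<noteq> (\<lambda>i. 0)" by (metis zero_neq_one)
        qed
        then show ?thesis using X gf2_single[of phi x] by blast
      qed
    next
      case False
      then have nJ: "\<not> J X" using Jc XS by force
      from False have "card X \<ge> 2" by simp
      have "\<not> (\<forall>x\<in>X. \<forall>y\<in>X. x = y)" using card_le_Suc0_iff_eq[OF fX] False by auto
      then obtain x y where xy: "x \<in> X" "y \<in> X" "x \<noteq> y" by blast
      have "\<not> gf2_lin_indep phi X"
      proof (cases "J {x} \<and> J {y}")
        case True
        have "\<And>i. (\<Sum>z\<in>{x,y}. phi z i) = 0" using True xy(3) by (simp add: phi_def bit_add_self)
        from gf2_dep[OF fX _ _ this] xy show ?thesis by auto
      next
        case False
        then obtain z where z: "z \<in> X" "\<not> J {z}" using xy by auto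
        have "\<And>i. (\<Sum>w\<in>{z}. phi w i) = 0" using z by (simp add: phi_def)
        from gf2_dep[OF fX _ _ this] z show ?thesis by auto
      qed
      then show ?thesis using nJ by simp
    qed
  qed
  then show ?thesis unfolding binary_def by auto
qed



lemma gf2_sub:
  assumes fX: "finite X" and g: "gf2_lin_indep phi Y" and YX: "Y \<subseteq> X"
    and S: "\<forall>i. (\<Sum>x\<in>X. k x * phi x i) = 0" and Z: "\<forall>x\<in>X - Y. k x = 0"
  shows "\<forall>x\<in>Y. k x = 0"
proof -
  have "\<forall>i. (\<Sum>x\<in>Y. k x * phi x i) = 0"
  proof
    fix i
    have "(\<Sum>x\<in>Y. k x * phi x i) = (\<Sum>x\<in>X. k x * phi x i)"
      by (rule sum.mono_neutral_left[OF fX YX]) (use Z in auto)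
    then show "(\<Sum>x\<in>Y. k x * phi x i) = 0" using S by simp
  qed
  then show ?thesis using g unfolding gf2_lin_indep_def by blast
qed

lemma circ:
  assumes fX: "finite X" and ng: "\<not> gf2_lin_indep phi X"
    and sub: "\<forall>x\<in>X. gf2_lin_indep phi (X - {x})"
  shows "(\<Sum>x\<in>X. phi x i) = 0"
proof -
  obtain k where S: "\<forall>i. (\<Sum>x\<in>X. k x * phi x i) = 0" and nz: "\<exists>x\<in>X. k x \<noteq> 0"
    using ng unfolding gf2_lin_indep_def by blast
  have one: "\<forall>x\<in>X. k x = 1"
  proof
    fix x assume x: "x \<in> X"
    show "k x = 1"
    proof (rule ccontr)
      assume "k x \<noteq> 1"
      then have k0: "k x = 0" using bit_cases01 by blast
      have "\<forall>y\<in>X - {x}. k y = 0"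
        by (rule gf2_sub[OF fX sub[rule_format, OF x] _ S]) (use k0 in auto)
      then show False using nz k0 by (metis Diff_iff empty_iff insert_iff)
    qed
  qed
  have "(\<Sum>x\<in>X. k x * phi x i) = (\<Sum>x\<in>X. phi x i)" by (rule sum.cong) (use one in auto)
  then show ?thesis using S by simp
qed

lemma contract_single:
  assumes "snd M {e}" "e \<in> fst M"
  shows "contract M {e} = (fst M - {e}, \<lambda>X. X \<subseteq> fst M - {e} \<and> snd M (X \<union> {e}))"
proof -
  have "basis_of (snd M) B ({e} \<inter> fst M) \<longleftrightarrow> B = {e}" for B
    using assms unfolding basis_of_def by (auto simp: subset_singleton_iff)
  then show ?thesis unfolding contract_def by auto
qed

lemma bit5: "(a::bit) + b + c + d = 0 \<Longrightarrow> a + e + c + d = 0 \<Longrightarrow> b = e"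
proof -
  assume h1: "a + b + c + d = 0" and h2: "a + e + c + d = 0"
  have "(a + b + c + d) + (a + e + c + d) = b + e + (a + a) + (c + c) + (d + d)"
    by algebra
  then have "b + e = e + e" using h1 h2 by (simp only: bit_add_self add_0_right add_0_left)
  then show "b = e" by (rule add_right_cancel[THEN iffD1])
qed

lemma bit3: "(a::bit) + b + c = 0 \<Longrightarrow> a + b + d = 0 \<Longrightarrow> c = d"
proof -
  assume h1: "a + b + c = 0" and h2: "a + b + d = 0"
  have "(a + b + c) + (a + b + d) = c + d + (a + a) + (b + b)"
    by algebra
  then have "c + d = d + d" using h1 h2 by (simp only: bit_add_self add_0_right add_0_left)
  then show "c = d" by (rule add_right_cancel[THEN iffD1])
qed


lemma sum4: "distinct [a,b,c,d] \<Longrightarrow> (\<Sum>x\<in>{a,b,c,d}. f x) = f a + f b + f c + (f d :: 'b::comm_monoid_add)"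
  by (simp add: add.assoc)
lemma sum3: "distinct [a,b,c] \<Longrightarrow> (\<Sum>x\<in>{a,b,c}. f x) = f a + f b + (f c :: 'b::comm_monoid_add)"
  by (simp add: add.assoc)

lemma circ4:
  assumes dist: "distinct [a,b,c,d]" and ng: "\<not> gf2_lin_indep phi {a,b,c,d}"
    and g: "gf2_lin_indep phi {b,c,d}" "gf2_lin_indep phi {a,c,d}" "gf2_lin_indep phi {a,b,d}" "gf2_lin_indep phi {a,b,c}"
  shows "phi a i + phi b i + phi c i + phi d i = 0"
proof -
  have "(\<Sum>x\<in>{a,b,c,d}. phi x i) = 0"
  proof (rule circ[OF _ ng])
    show "finite {a,b,c,d}" by simp
    show "\<forall>x\<in>{a,b,c,d}. gf2_lin_indep phi ({a,b,c,d} - {x})"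
    proof
      fix x assume "x \<in> {a,b,c,d}"
      then have "x = a \<or> x = b \<or> x = c \<or> x = d" by simp
      then show "gf2_lin_indep phi ({a,b,c,d} - {x})"
        using dist g by (elim disjE) (auto simp: insert_Diff_if)
    qed
  qed
  then show ?thesis unfolding sum4[OF dist] .
qed

lemma circ3:
  assumes dist: "distinct [a,b,c]" and ng: "\<not> gf2_lin_indep phi {a,b,c}"
    and g: "gf2_lin_indep phi {b,c}" "gf2_lin_indep phi {a,c}" "gf2_lin_indep phi {a,b}"
  shows "phi a i + phi b i + phi c i = 0"
proof -
  have "(\<Sum>x\<in>{a,b,c}. phi x i) = 0"
  proof (rule circ[OF _ ng])
    show "finite {a,b,c}" by simp
    show "\<forall>x\<in>{a,b,c}. gf2_lin_indep phi ({a,b,c} - {x})"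
    proof
      fix x assume "x \<in> {a,b,c}"
      then have "x = a \<or> x = b \<or> x = c" by simp
      then show "gf2_lin_indep phi ({a,b,c} - {x})"
        using dist g by (elim disjE) (auto simp: insert_Diff_if)
    qed
  qed
  then show ?thesis unfolding sum3[OF dist] .
qed



lemma basis_exists:
  assumes "finite C" "ind {}"
  shows "\<exists>B. basis_of ind B C"
proof -
  let ?P = "\<lambda>B. B \<subseteq> C \<and> ind B"
  have "\<forall>y. ?P y \<longrightarrow> card y < Suc (card C)" using assms(1) by (simp add: card_mono le_imp_less_Suc)
  from ex_has_greatest_nat[of ?P "{}", OF _ this] assms(2)
  obtain B where B: "?P B" "\<forall>y. ?P y \<longrightarrow> card y \<le> card B" by auto
  have "\<forall>x\<in>C - B. \<not> ind (insert x B)"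
  proof (intro ballI notI)
    fix x assume x: "x \<in> C - B" "ind (insert x B)"
    then have "card (insert x B) \<le> card B" using B by auto
    moreover have "finite B" using B(1) assms(1) finite_subset by blast
    ultimately show False using x by simp
  qed
  then show ?thesis using B unfolding basis_of_def by blast
qed

lemma minor_in_Z:
  assumes fE: "finite E" and I_sub: "\<And>X. I X \<Longrightarrow> X \<subseteq> E"
    and I_card: "\<And>X. I X \<Longrightarrow> card X \<le> 3"
    and I_small: "\<And>X. X \<subseteq> E \<Longrightarrow> card X \<le> 2 \<Longrightarrow> I X"
    and binD: "\<And>d e. d \<in> E \<Longrightarrow> e \<in> E \<Longrightarrow> d \<noteq> e \<Longrightarrow> binary (E - {d,e}, \<lambda>X. X \<subseteq> E - {d,e} \<and> I X)"
    and pm: "proper_minor N (E, I)"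
  shows "in_Z N"
proof -
  obtain C D where CD: "C \<subseteq> E" "D \<subseteq> E" "C \<inter> D = {}" "C \<union> D \<noteq> {}"
    and N: "N = contract (delete (E, I) D) C"
    using pm unfolding proper_minor_def by auto
  define ID where "ID = (\<lambda>X. X \<subseteq> E - D \<and> I X)"
  have del: "delete (E, I) D = (E - D, ID)" unfolding delete_def ID_def by simp
  have CE: "C \<inter> (E - D) = C" using CD by auto
  define IN where "IN = (\<lambda>X. X \<subseteq> E - D - C \<and> (\<exists>B. basis_of ID B C \<and> ID (X \<union> B)))"
  have Neq: "N = (E - D - C, IN)" unfolding N del contract_def IN_def fst_conv snd_conv CE by simp
  have I0: "I {}" using I_small by simp
  show ?thesis unfolding in_Z_def
  proof
    fix e assume "e \<in> fst N"
    then have e: "e \<in> E" "e \<notin> D" "e \<notin> C" using Neq by auto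
    show "binary (delete N {e}) \<or> binary (contract N {e})"
    proof (cases "C = {}")
      case True
      then obtain d where d: "d \<in> D" using CD by auto
      have de: "d \<noteq> e" using d e by auto
      obtain phi where phi: "\<forall>X\<subseteq>E - {d,e}. (X \<subseteq> E - {d,e} \<and> I X) \<longleftrightarrow> gf2_lin_indep phi X"
        using binD[OF _ e(1) de] d CD(2) unfolding binary_def by auto
      have bas: "basis_of ID B {} \<longleftrightarrow> B = {}" for B
        unfolding basis_of_def ID_def using I0 by auto
      have "\<forall>X\<subseteq>fst (delete N {e}). snd (delete N {e}) X \<longleftrightarrow> gf2_lin_indep phi X"
      proof (intro allI impI)
        fix X assume X: "X \<subseteq> fst (delete N {e})"
        then have X': "X \<subseteq> E - D - {e}" using Neq True unfolding delete_def by auto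
        have "IN X \<longleftrightarrow> X \<subseteq> E - D \<and> ID X" unfolding IN_def using True by (simp add: bas)
        then have "snd (delete N {e}) X \<longleftrightarrow> I X" using X' True Neq unfolding delete_def ID_def by auto
        also have "\<dots> \<longleftrightarrow> gf2_lin_indep phi X" using phi X' d by auto
        finally show "snd (delete N {e}) X \<longleftrightarrow> gf2_lin_indep phi X" .
      qed
      then show ?thesis unfolding binary_def by blast
    next
      case False
      have fC: "finite C" using CD(1) fE finite_subset by blast
      obtain B0 where B0: "basis_of ID B0 C" using basis_exists[OF fC, of ID] I0 unfolding ID_def by auto
      have IN0: "IN {}" unfolding IN_def using B0 unfolding basis_of_def by auto
      have Bne: "B \<noteq> {}" if "basis_of ID B C" for B
      proof
        assume "B = {}"
        obtain c where "c \<in> C" using False by auto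
        then have "ID {c}" unfolding ID_def using CD I_small by auto
        then show False using that \<open>B = {}\<close> \<open>c \<in> C\<close> unfolding basis_of_def by auto
      qed
      have eN: "{e} \<inter> fst N = {e}" using Neq e by auto
      define J where "J = (\<lambda>X. X \<subseteq> E - D - C - {e} \<and> (\<exists>B'. basis_of IN B' {e} \<and> IN (X \<union> B')))"
      have ceq: "contract N {e} = (E - D - C - {e}, J)"
        unfolding contract_def eN unfolding Neq J_def by simp
      have "binary (E - D - C - {e}, J)"
      proof (rule binary_rank1)
        show "finite (E - D - C - {e})" using fE by simp
        show "J {}"
        proof (cases "IN {e}")
          case True
          then have "basis_of IN {e} {e}" unfolding basis_of_def by auto
          then show ?thesis unfolding J_def using True by auto
        next
          case False
          then have "basis_of IN {} {e}" unfolding basis_of_def using IN0 by auto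
          then show ?thesis unfolding J_def using IN0 by auto
        qed
        fix X assume XS: "X \<subseteq> E - D - C - {e}" and JX: "J X"
        then obtain B' where B': "basis_of IN B' {e}" "IN (X \<union> B')" unfolding J_def by auto
        then obtain B where B: "basis_of ID B C" "ID (X \<union> B' \<union> B)" unfolding IN_def by auto
        have BC: "B \<subseteq> C" using B(1) unfolding basis_of_def by auto
        have B'e: "B' \<subseteq> {e}" using B'(1) unfolding basis_of_def by auto
        have fB: "finite B" using BC fC finite_subset by blast
        have two: "2 \<le> card (B' \<union> B)"
        proof (cases "e \<in> B'")
          case True
          then have "B' \<union> B = insert e B" using B'e by auto
          moreover have "e \<notin> B" using BC e by auto
          moreover have "card B \<ge> 1" using Bne[OF B(1)] fB by (simp add: Suc_leI card_gt_0_iff)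
          ultimately show ?thesis using fB by simp
        next
          case False
          then have B'0: "B' = {}" using B'e by auto
          then have "\<not> IN {e}" using B'(1) unfolding basis_of_def by auto
          then have "\<not> ID (insert e B)" unfolding IN_def using B(1) e by auto
          moreover have "insert e B \<subseteq> E - D" using BC CD e by auto
          ultimately have "\<not> I (insert e B)" unfolding ID_def by auto
          moreover have "insert e B \<subseteq> E" using \<open>insert e B \<subseteq> E - D\<close> by auto
          ultimately have "\<not> card (insert e B) \<le> 2" using I_small by blast
          moreover have "e \<notin> B" using BC e by auto
          ultimately have "card B \<ge> 2" using fB by simp
          then show ?thesis using B'0 by simp
        qed
        have "card (X \<union> B' \<union> B) \<le> 3" using B(2) I_card unfolding ID_def by auto
        moreover have "X \<inter> (B' \<union> B) = {}" using XS B'e BC by auto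
        moreover have "finite X" using XS fE finite_subset by blast
        moreover have "finite B'" using B'e finite_subset by blast
        ultimately have "card X + card (B' \<union> B) \<le> 3"
          using card_Un_disjoint[of X "B' \<union> B"] fB by (simp add: Un_assoc)
        then show "card X \<le> 1" using two by simp
      qed
      then show ?thesis using ceq by simp
    qed
  qed
qed



definition phiv :: "(nat \<Rightarrow> nat set) \<Rightarrow> nat \<Rightarrow> nat \<Rightarrow> bit" where
  "phiv v x i = (if i \<in> v x then 1 else 0)"

definition linv :: "(nat \<Rightarrow> nat set) \<Rightarrow> nat set \<Rightarrow> bool" where
  "linv v X = (\<forall>Y\<in>Pow X. Y \<noteq> {} \<longrightarrow> (\<exists>i\<in>\<Union>(v`Y). odd (card {x\<in>Y. i \<in> v x})))"

lemma sum_phiv: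
  assumes "finite Y"
  shows "(\<Sum>x\<in>Y. phiv v x i) = (if odd (card {x\<in>Y. i \<in> v x}) then 1 else 0)"
  using assms
proof (induction Y rule: finite_induct)
  case empty then show ?case by simp
next
  case (insert a F)
  have fF: "finite {x\<in>F. i \<in> v x}" using insert(1) by simp
  have aF: "a \<notin> {x\<in>F. i \<in> v x}" using insert(2) by simp
  show ?case
  proof (cases "i \<in> v a")
    case True
    then have "{x\<in>insert a F. i \<in> v x} = insert a {x\<in>F. i \<in> v x}" by auto
    then show ?thesis using insert True fF aF by (simp add: phiv_def bit_add_self)
  next
    case False
    then have "{x\<in>insert a F. i \<in> v x} = {x\<in>F. i \<in> v x}" by auto
    then show ?thesis using insert False by (simp add: phiv_def)
  qed
qed

lemma gf2_linv:
  assumes fX: "finite X"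
  shows "gf2_lin_indep (phiv v) X \<longleftrightarrow> linv v X"
proof
  assume g: "gf2_lin_indep (phiv v) X"
  show "linv v X" unfolding linv_def
  proof (intro ballI impI, rule ccontr)
    fix Y assume Y: "Y \<in> Pow X" "Y \<noteq> {}" and H: "\<not> (\<exists>i\<in>\<Union>(v`Y). odd (card {x\<in>Y. i \<in> v x}))"
    have "\<And>i. (\<Sum>z\<in>Y. phiv v z i) = 0"
    proof -
      fix i
      have fY: "finite Y" using Y fX finite_subset by blast
      show "(\<Sum>z\<in>Y. phiv v z i) = 0"
      proof (cases "i \<in> \<Union>(v`Y)")
        case True
        then have "even (card {x\<in>Y. i \<in> v x})" using H by blast
        then show ?thesis using sum_phiv[OF fY, of v i] by simp
      next
        case False
        then have "{x\<in>Y. i \<in> v x} = {}" by auto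
        then have "card {x\<in>Y. i \<in> v x} = 0" by (simp only: card.empty)
        then show ?thesis using sum_phiv[OF fY, of v i] by simp
      qed
    qed
    from gf2_dep[OF fX _ Y(2) this] Y(1) g show False by auto
  qed
next
  assume l: "linv v X"
  show "gf2_lin_indep (phiv v) X" unfolding gf2_lin_indep_def
  proof (intro allI impI)
    fix c :: "nat \<Rightarrow> bit" assume S: "\<forall>i. (\<Sum>x\<in>X. c x * phiv v x i) = 0"
    define Y where "Y = {x\<in>X. c x = 1}"
    have YX: "Y \<subseteq> X" unfolding Y_def by auto
    have fY: "finite Y" using YX fX finite_subset by blast
    have "\<And>i. (\<Sum>x\<in>X. c x * phiv v x i) = (\<Sum>x\<in>X. (if x \<in> Y then 1 else 0) * phiv v x i)"
      by (rule sum.cong) (auto simp: Y_def dest: bit_cases01[THEN disjE])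
    then have Z: "\<And>i. (\<Sum>x\<in>Y. phiv v x i) = 0" using S sum_ind[OF fX YX] by simp
    have "Y = {}"
    proof (rule ccontr)
      assume "Y \<noteq> {}"
      then obtain i where "odd (card {x\<in>Y. i \<in> v x})" using l YX unfolding linv_def by blast
      then show False using Z[of i] sum_phiv[OF fY] by simp
    qed
    then show "\<forall>x\<in>X. c x = 0" unfolding Y_def using bit_cases01 by blast
  qed
qed

lemma binary_check:
  assumes "finite S" "\<forall>X\<in>Pow S. J X \<longleftrightarrow> linv v X"
  shows "binary (S, \<lambda>X. X \<subseteq> S \<and> J X)"
  unfolding binary_def
proof (intro exI[of _ "phiv v"] allI impI)
  fix X assume "X \<subseteq> fst (S, \<lambda>X. X \<subseteq> S \<and> J X)"
  then have X: "X \<subseteq> S" by simp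
  then have "finite X" using assms(1) finite_subset by blast
  then show "snd (S, \<lambda>X. X \<subseteq> S \<and> J X) X \<longleftrightarrow> gf2_lin_indep (phiv v) X"
    using gf2_linv assms(2) X by auto
qed



definition IT :: "nat set \<Rightarrow> nat set set \<Rightarrow> nat set \<Rightarrow> bool" where
  "IT E T X = (X \<subseteq> E \<and> card X \<le> 3 \<and> X \<notin> T)"

lemma IT_down:
  assumes "finite E" "\<forall>t\<in>T. card t = 3" "IT E T Y" "X \<subseteq> Y"
  shows "IT E T X"
proof -
  have fY: "finite Y" using assms(1,3) unfolding IT_def by (meson finite_subset)
  have c: "card X \<le> card Y" using card_mono[OF fY assms(4)] .
  have "X \<notin> T"
  proof
    assume "X \<in> T"
    then have "card X = 3" using assms(2) by auto
    then have "card X = card Y" using c assms(3) unfolding IT_def by simp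
    then have "X = Y" using card_subset_eq[OF fY assms(4)] by simp
    then show False using \<open>X \<in> T\<close> assms(3) unfolding IT_def by simp
  qed
  then show ?thesis using assms(3,4) c unfolding IT_def by auto
qed

lemma IT_exch:
  assumes fE: "finite E" and T3: "\<forall>t\<in>T. card t = 3"
    and T2: "\<forall>t\<in>T. \<forall>t'\<in>T. t \<noteq> t' \<longrightarrow> card (t \<inter> t') \<le> 1"
    and X: "IT E T X" and Y: "IT E T Y" and cXY: "card X < card Y"
  shows "\<exists>y\<in>Y - X. IT E T (insert y X)"
proof (rule ccontr)
  assume H: "\<not> (\<exists>y\<in>Y - X. IT E T (insert y X))"
  have fX: "finite X" and fY: "finite Y" using X Y fE unfolding IT_def by (meson finite_subset)+
  have "\<not> Y \<subseteq> X" using card_mono[OF fX, of Y] cXY by linarith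
  then obtain y1 where y1: "y1 \<in> Y" "y1 \<notin> X" by blast
  have cY: "card Y \<le> 3" using Y unfolding IT_def by simp
  have ins: "insert y X \<in> T \<and> card X = 2" if "y \<in> Y" "y \<notin> X" for y
  proof -
    have "insert y X \<subseteq> E" using that X Y unfolding IT_def by auto
    moreover have "card (insert y X) \<le> 3" using that fX cXY cY by simp
    ultimately have "insert y X \<in> T" using H that unfolding IT_def by auto
    then have "card (insert y X) = 3" using T3 by auto
    then show ?thesis using \<open>insert y X \<in> T\<close> fX that by simp
  qed
  have cX: "card X = 2" using ins y1 by blast
  then have cY3: "card Y = 3" using cXY cY by simp
  show False
  proof (cases "\<exists>y2\<in>Y. y2 \<notin> X \<and> y2 \<noteq> y1")
    case True
    then obtain y2 where y2: "y2 \<in> Y" "y2 \<notin> X" "y2 \<noteq> y1" by blast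
    have t1: "insert y1 X \<in> T" and t2: "insert y2 X \<in> T" using ins y1 y2 by blast+
    have ne: "insert y1 X \<noteq> insert y2 X" using y2 y1 by auto
    have "X \<subseteq> insert y1 X \<inter> insert y2 X" by auto
    then have "card X \<le> card (insert y1 X \<inter> insert y2 X)"
      by (rule card_mono[rotated]) (simp add: fX)
    then show False using T2 t1 t2 ne cX by fastforce
  next
    case False
    then have "Y \<subseteq> insert y1 X" by auto
    moreover have "card (insert y1 X) = 3" using cX fX y1 by simp
    ultimately have "Y = insert y1 X" using card_subset_eq[of "insert y1 X" Y] fX cY3 by simp
    then show False using ins[OF y1] Y unfolding IT_def by simp
  qed
qed

lemma matroid_IT:
  assumes fE: "finite E" and T3: "\<forall>t\<in>T. card t = 3"
    and T2: "\<forall>t\<in>T. \<forall>t'\<in>T. t \<noteq> t' \<longrightarrow> card (t \<inter> t') \<le> 1"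
  shows "matroid (E, IT E T)"
  unfolding matroid_def Let_def fst_conv snd_conv
proof (intro conjI allI impI)
  show "finite E" by fact
  fix X assume "IT E T X" then show "X \<subseteq> E" unfolding IT_def by simp
next
  show "IT E T {}" using T3 unfolding IT_def by force
next
  fix X Y assume "IT E T Y \<and> X \<subseteq> Y" then show "IT E T X" using IT_down[OF fE T3] by blast
next
  fix X Y assume "IT E T X \<and> IT E T Y \<and> card X < card Y"
  then show "\<exists>y\<in>Y - X. IT E T (insert y X)" using IT_exch[OF fE T3 T2] by blast
qed



definition lk :: "('a \<times> 'b set) list \<Rightarrow> 'a \<Rightarrow> 'b set" where
  "lk l x = (case map_of l x of None \<Rightarrow> {} | Some v \<Rightarrow> v)"
definition lkl :: "('a \<times> 'b list) list \<Rightarrow> 'a \<Rightarrow> 'b list" where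
  "lkl l x = (case map_of l x of None \<Rightarrow> [] | Some v \<Rightarrow> v)"

definition tab_U36 :: "((nat\<times>nat)\<times>(nat\<times>nat set) list) list" where
 "tab_U36 = [((0,1),[(2,{0}),(3,{1}),(4,{2}),(5,{0,1,2})]),
  ((0,2),[(1,{0}),(3,{1}),(4,{2}),(5,{0,1,2})]),
  ((0,3),[(1,{0}),(2,{1}),(4,{2}),(5,{0,1,2})]),
  ((0,4),[(1,{0}),(2,{1}),(3,{2}),(5,{0,1,2})]),
  ((0,5),[(1,{0}),(2,{1}),(3,{2}),(4,{0,1,2})]),
  ((1,2),[(0,{0}),(3,{1}),(4,{2}),(5,{0,1,2})]),
  ((1,3),[(0,{0}),(2,{1}),(4,{2}),(5,{0,1,2})]),
  ((1,4),[(0,{0}),(2,{1}),(3,{2}),(5,{0,1,2})]),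
  ((1,5),[(0,{0}),(2,{1}),(3,{2}),(4,{0,1,2})]),
  ((2,3),[(0,{0}),(1,{1}),(4,{2}),(5,{0,1,2})]),
  ((2,4),[(0,{0}),(1,{1}),(3,{2}),(5,{0,1,2})]),
  ((2,5),[(0,{0}),(1,{1}),(3,{2}),(4,{0,1,2})]),
  ((3,4),[(0,{0}),(1,{1}),(2,{2}),(5,{0,1,2})]),
  ((3,5),[(0,{0}),(1,{1}),(2,{2}),(4,{0,1,2})]),
  ((4,5),[(0,{0}),(1,{1}),(2,{2}),(3,{0,1,2})])]"

definition tab_P6 :: "((nat\<times>nat)\<times>(nat\<times>nat set) list) list" where
 "tab_P6 = [((0,1),[(2,{0}),(3,{1}),(4,{2}),(5,{0,1,2})]),
  ((0,2),[(1,{0}),(3,{1}),(4,{2}),(5,{0,1,2})]),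
  ((0,3),[(1,{0}),(2,{1}),(4,{2}),(5,{0,1,2})]),
  ((0,4),[(1,{0}),(2,{1}),(3,{2}),(5,{0,1,2})]),
  ((0,5),[(1,{0}),(2,{1}),(3,{2}),(4,{0,1,2})]),
  ((1,2),[(0,{0}),(3,{1}),(4,{2}),(5,{0,1,2})]),
  ((1,3),[(0,{0}),(2,{1}),(4,{2}),(5,{0,1,2})]),
  ((1,4),[(0,{0}),(2,{1}),(3,{2}),(5,{0,1,2})]),
  ((1,5),[(0,{0}),(2,{1}),(3,{2}),(4,{0,1,2})]),
  ((2,3),[(0,{0}),(1,{1}),(4,{2}),(5,{0,1,2})]),
  ((2,4),[(0,{0}),(1,{1}),(3,{2}),(5,{0,1,2})]),
  ((2,5),[(0,{0}),(1,{1}),(3,{2}),(4,{0,1,2})]),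
  ((3,4),[(0,{0}),(1,{1}),(2,{0,1}),(5,{2})]),
  ((3,5),[(0,{0}),(1,{1}),(2,{0,1}),(4,{2})]),
  ((4,5),[(0,{0}),(1,{1}),(2,{0,1}),(3,{2})])]"

definition tab_Q6 :: "((nat\<times>nat)\<times>(nat\<times>nat set) list) list" where
 "tab_Q6 = [((0,1),[(2,{0}),(3,{1}),(4,{0,1}),(5,{2})]),
  ((0,2),[(1,{0}),(3,{1}),(4,{2}),(5,{0,1,2})]),
  ((0,3),[(1,{0}),(2,{1}),(4,{2}),(5,{0,1,2})]),
  ((0,4),[(1,{0}),(2,{1}),(3,{2}),(5,{0,1,2})]),
  ((0,5),[(1,{0}),(2,{1}),(3,{2}),(4,{1,2})]),
  ((1,2),[(0,{0}),(3,{1}),(4,{2}),(5,{0,1,2})]),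
  ((1,3),[(0,{0}),(2,{1}),(4,{2}),(5,{0,1,2})]),
  ((1,4),[(0,{0}),(2,{1}),(3,{2}),(5,{0,1,2})]),
  ((1,5),[(0,{0}),(2,{1}),(3,{2}),(4,{1,2})]),
  ((2,3),[(0,{0}),(1,{1}),(4,{2}),(5,{0,1,2})]),
  ((2,4),[(0,{0}),(1,{1}),(3,{2}),(5,{0,1,2})]),
  ((2,5),[(0,{0}),(1,{1}),(3,{2}),(4,{0,1,2})]),
  ((3,4),[(0,{0}),(1,{1}),(2,{0,1}),(5,{2})]),
  ((3,5),[(0,{0}),(1,{1}),(2,{0,1}),(4,{2})]),
  ((4,5),[(0,{0}),(1,{1}),(2,{0,1}),(3,{2})])]"

lemma chk_U36: "\<forall>d\<in>{0,1,2,3,4,5}. \<forall>e\<in>{0,1,2,3,4,5}. d < e \<longrightarrow>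
   (\<forall>X\<in>Pow ({0,1,2,3,4,5} - {d,e}). IT {0,1,2,3,4,5} {} X \<longleftrightarrow> linv (\<lambda>x. lk (lkl tab_U36 (d,e)) x) X)"
  unfolding IT_def linv_def lk_def lkl_def tab_U36_def by code_simp

lemma chk_P6: "\<forall>d\<in>{0,1,2,3,4,5}. \<forall>e\<in>{0,1,2,3,4,5}. d < e \<longrightarrow>
   (\<forall>X\<in>Pow ({0,1,2,3,4,5} - {d,e}). IT {0,1,2,3,4,5} {{0,1,2}} X \<longleftrightarrow> linv (\<lambda>x. lk (lkl tab_P6 (d,e)) x) X)"
  unfolding IT_def linv_def lk_def lkl_def tab_P6_def by code_simp

lemma chk_Q6: "\<forall>d\<in>{0,1,2,3,4,5}. \<forall>e\<in>{0,1,2,3,4,5}. d < e \<longrightarrow>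
   (\<forall>X\<in>Pow ({0,1,2,3,4,5} - {d,e}). IT {0,1,2,3,4,5} {{0,1,2},{2,3,4}} X \<longleftrightarrow> linv (\<lambda>x. lk (lkl tab_Q6 (d,e)) x) X)"
  unfolding IT_def linv_def lk_def lkl_def tab_Q6_def by code_simp

lemma binD_from_chk:
  assumes chk: "\<forall>d\<in>E. \<forall>e\<in>E. d < e \<longrightarrow> (\<forall>X\<in>Pow (E - {d,e}). J X \<longleftrightarrow> linv (W d e) X)"
    and fE: "finite E" and de: "d \<in> E" "e \<in> E" "d \<noteq> (e::nat)"
  shows "binary (E - {d,e}, \<lambda>X. X \<subseteq> E - {d,e} \<and> J X)"
proof (cases "d < e")
  case True
  then show ?thesis using chk de by (intro binary_check[where v="W d e"]) (simp_all add: fE)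
next
  case False
  then have "e < d" using de by simp
  then have "binary (E - {e,d}, \<lambda>X. X \<subseteq> E - {e,d} \<and> J X)"
    using chk de by (intro binary_check[where v="W e d"]) (simp_all add: fE)
  then show ?thesis by (simp add: insert_commute)
qed



lemma E6: "{0..5::nat} = {0,1,2,3,4,5}" by auto

lemma tri_eq: "finite X \<Longrightarrow> card X \<le> 3 \<Longrightarrow> card T = 3 \<Longrightarrow> (X = T \<longleftrightarrow> T \<subseteq> X)"
  by (metis card_seteq order_refl)



lemma P6_not_Z: "\<not> in_Z P6"
proof
  assume "in_Z P6"
  then have "binary (delete P6 {5}) \<or> binary (contract P6 {5})"
    unfolding in_Z_def P6_def by auto
  then show False
  proof
    assume "binary (delete P6 {5})"
    then obtain phi where H: "\<forall>X\<subseteq>fst (delete P6 {5}). snd (delete P6 {5}) X \<longleftrightarrow> gf2_lin_indep phi X"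
      unfolding binary_def by blast
    have G: "gf2_lin_indep phi X \<longleftrightarrow> (card X \<le> 3 \<and> \<not> {0,1,2} \<subseteq> X)" if "X \<subseteq> {0,1,2,3,4}" for X
    proof -
      have "X \<subseteq> fst (delete P6 {5})" using that unfolding delete_def P6_def E6 by auto
      then have a: "snd (delete P6 {5}) X \<longleftrightarrow> gf2_lin_indep phi X" using H by blast
      have b: "snd (delete P6 {5}) X \<longleftrightarrow> (card X \<le> 3 \<and> X \<noteq> {0,1,2})"
      proof -
        have "X \<subseteq> {0..5} - {5}" "X \<subseteq> {0..5}" using that by auto
        then show ?thesis by (simp add: delete_def P6_def)
      qed
      have ab: "gf2_lin_indep phi X \<longleftrightarrow> (card X \<le> 3 \<and> X \<noteq> {0,1,2})" using a b by simp
      have fX: "finite X" using that finite_subset by blast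
      have c0: "card {0,1,2::nat} = 3" by simp
      show ?thesis using ab by (cases "card X \<le> 3") (simp_all only: tri_eq[OF fX _ c0] simp_thms)
    qed
    have s1: "phi 0 i + phi 1 i + phi 3 i + phi 4 i = 0" for i
      by (rule circ4[of 0 1 3 4 phi]) (simp_all add: G)
    have s2: "phi 0 i + phi 2 i + phi 3 i + phi 4 i = 0" for i
      by (rule circ4[of 0 2 3 4 phi]) (simp_all add: G)
    have "phi 1 = phi 2" using bit5[OF s1 s2] by auto
    moreover have "gf2_lin_indep phi {1,2}" by (simp add: G)
    ultimately show False using gf2_pair[of phi 1 2] by simp
  next
    assume "binary (contract P6 {5})"
    moreover have "contract P6 {5} = (fst P6 - {5}, \<lambda>X. X \<subseteq> fst P6 - {5} \<and> snd P6 (X \<union> {5}))"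
      by (rule contract_single) (simp_all add: P6_def)
    ultimately obtain phi where H: "\<forall>X\<subseteq>fst P6 - {5}. (X \<subseteq> fst P6 - {5} \<and> snd P6 (X \<union> {5})) \<longleftrightarrow> gf2_lin_indep phi X"
      unfolding binary_def by auto
    have G: "gf2_lin_indep phi X \<longleftrightarrow> (card (insert 5 X) \<le> 3 \<and> \<not> {0,1,2} \<subseteq> insert 5 X)" if "X \<subseteq> {0,1,2,3,4}" for X
    proof -
      have "X \<subseteq> fst P6 - {5}" using that unfolding P6_def E6 by auto
      then have a: "(X \<subseteq> fst P6 - {5} \<and> snd P6 (X \<union> {5})) \<longleftrightarrow> gf2_lin_indep phi X" using H by blast
      have b: "(X \<subseteq> fst P6 - {5} \<and> snd P6 (X \<union> {5})) \<longleftrightarrow> (card (insert 5 X) \<le> 3 \<and> insert 5 X \<noteq> {0,1,2})"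
      proof -
        have "X \<subseteq> {0..5} - {5}" "X \<subseteq> {0..5}" "5 \<in> {0..5::nat}" using that by auto
        then show ?thesis by (simp add: P6_def)
      qed
      have ab: "gf2_lin_indep phi X \<longleftrightarrow> (card (insert 5 X) \<le> 3 \<and> insert 5 X \<noteq> {0,1,2})" using a b by simp
      have fX: "finite (insert 5 X)" using that finite_subset by blast
      have c0: "card {0,1,2::nat} = 3" by simp
      show ?thesis using ab by (cases "card (insert 5 X) \<le> 3") (simp_all only: tri_eq[OF fX _ c0] simp_thms)
    qed
    have s1: "phi 0 i + phi 1 i + phi 3 i = 0" for i
      by (rule circ3[of 0 1 3 phi]) (simp_all add: G)
    have s2: "phi 0 i + phi 1 i + phi 4 i = 0" for i
      by (rule circ3[of 0 1 4 phi]) (simp_all add: G)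
    have "phi 3 = phi 4" using bit3[OF s1 s2] by auto
    moreover have "gf2_lin_indep phi {3,4}" by (simp add: G)
    ultimately show False using gf2_pair[of phi 3 4] by simp
  qed
qed

lemma U36_not_Z: "\<not> in_Z U36"
proof
  assume "in_Z U36"
  then have "binary (delete U36 {5}) \<or> binary (contract U36 {5})"
    unfolding in_Z_def U36_def by auto
  then show False
  proof
    assume "binary (delete U36 {5})"
    then obtain phi where H: "\<forall>X\<subseteq>fst (delete U36 {5}). snd (delete U36 {5}) X \<longleftrightarrow> gf2_lin_indep phi X"
      unfolding binary_def by blast
    have G: "gf2_lin_indep phi X \<longleftrightarrow> (card X \<le> 3 \<and> True)" if "X \<subseteq> {0,1,2,3,4}" for X
    proof -
      have "X \<subseteq> fst (delete U36 {5})" using that unfolding delete_def U36_def E6 by auto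
      then have a: "snd (delete U36 {5}) X \<longleftrightarrow> gf2_lin_indep phi X" using H by blast
      have b: "snd (delete U36 {5}) X \<longleftrightarrow> (card X \<le> 3 \<and> True)"
      proof -
        have "X \<subseteq> {0..5} - {5}" "X \<subseteq> {0..5}" using that by auto
        then show ?thesis by (simp add: delete_def U36_def)
      qed
      have ab: "gf2_lin_indep phi X \<longleftrightarrow> (card X \<le> 3 \<and> True)" using a b by simp
      have fX: "finite X" using that finite_subset by blast
      show ?thesis using ab by (cases "card X \<le> 3") (simp_all add: )
    qed
    have s1: "phi 0 i + phi 1 i + phi 3 i + phi 4 i = 0" for i
      by (rule circ4[of 0 1 3 4 phi]) (simp_all add: G)
    have s2: "phi 0 i + phi 2 i + phi 3 i + phi 4 i = 0" for i
      by (rule circ4[of 0 2 3 4 phi]) (simp_all add: G)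
    have "phi 1 = phi 2" using bit5[OF s1 s2] by auto
    moreover have "gf2_lin_indep phi {1,2}" by (simp add: G)
    ultimately show False using gf2_pair[of phi 1 2] by simp
  next
    assume "binary (contract U36 {5})"
    moreover have "contract U36 {5} = (fst U36 - {5}, \<lambda>X. X \<subseteq> fst U36 - {5} \<and> snd U36 (X \<union> {5}))"
      by (rule contract_single) (simp_all add: U36_def)
    ultimately obtain phi where H: "\<forall>X\<subseteq>fst U36 - {5}. (X \<subseteq> fst U36 - {5} \<and> snd U36 (X \<union> {5})) \<longleftrightarrow> gf2_lin_indep phi X"
      unfolding binary_def by auto
    have G: "gf2_lin_indep phi X \<longleftrightarrow> (card (insert 5 X) \<le> 3 \<and> True)" if "X \<subseteq> {0,1,2,3,4}" for X
    proof -
      have "X \<subseteq> fst U36 - {5}" using that unfolding U36_def E6 by auto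
      then have a: "(X \<subseteq> fst U36 - {5} \<and> snd U36 (X \<union> {5})) \<longleftrightarrow> gf2_lin_indep phi X" using H by blast
      have b: "(X \<subseteq> fst U36 - {5} \<and> snd U36 (X \<union> {5})) \<longleftrightarrow> (card (insert 5 X) \<le> 3 \<and> True)"
      proof -
        have "X \<subseteq> {0..5} - {5}" "X \<subseteq> {0..5}" "5 \<in> {0..5::nat}" using that by auto
        then show ?thesis by (simp add: U36_def)
      qed
      have ab: "gf2_lin_indep phi X \<longleftrightarrow> (card (insert 5 X) \<le> 3 \<and> True)" using a b by simp
      have fX: "finite (insert 5 X)" using that finite_subset by blast
      show ?thesis using ab by (cases "card (insert 5 X) \<le> 3") (simp_all only:  simp_thms)
    qed
    have s1: "phi 0 i + phi 1 i + phi 3 i = 0" for i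
      by (rule circ3[of 0 1 3 phi]) (simp_all add: G)
    have s2: "phi 0 i + phi 1 i + phi 4 i = 0" for i
      by (rule circ3[of 0 1 4 phi]) (simp_all add: G)
    have "phi 3 = phi 4" using bit3[OF s1 s2] by auto
    moreover have "gf2_lin_indep phi {3,4}" by (simp add: G)
    ultimately show False using gf2_pair[of phi 3 4] by simp
  qed
qed

lemma Q6_not_Z: "\<not> in_Z Q6"
proof
  assume "in_Z Q6"
  then have "binary (delete Q6 {0}) \<or> binary (contract Q6 {0})"
    unfolding in_Z_def Q6_def by auto
  then show False
  proof
    assume "binary (delete Q6 {0})"
    then obtain phi where H: "\<forall>X\<subseteq>fst (delete Q6 {0}). snd (delete Q6 {0}) X \<longleftrightarrow> gf2_lin_indep phi X"
      unfolding binary_def by blast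
    have G: "gf2_lin_indep phi X \<longleftrightarrow> (card X \<le> 3 \<and> \<not> {0,1,2} \<subseteq> X \<and> \<not> {2,3,4} \<subseteq> X)" if "X \<subseteq> {1,2,3,4,5}" for X
    proof -
      have "X \<subseteq> fst (delete Q6 {0})" using that unfolding delete_def Q6_def E6 by auto
      then have a: "snd (delete Q6 {0}) X \<longleftrightarrow> gf2_lin_indep phi X" using H by blast
      have b: "snd (delete Q6 {0}) X \<longleftrightarrow> (card X \<le> 3 \<and> X \<noteq> {0,1,2} \<and> X \<noteq> {2,3,4})"
      proof -
        have "X \<subseteq> {0..5} - {0}" "X \<subseteq> {0..5}" using that by auto
        then show ?thesis by (simp add: delete_def Q6_def)
      qed
      have ab: "gf2_lin_indep phi X \<longleftrightarrow> (card X \<le> 3 \<and> X \<noteq> {0,1,2} \<and> X \<noteq> {2,3,4})" using a b by simp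
      have fX: "finite X" using that finite_subset by blast
      have c0: "card {0,1,2::nat} = 3" by simp
      have c1: "card {2,3,4::nat} = 3" by simp
      show ?thesis using ab by (cases "card X \<le> 3") (simp_all only: tri_eq[OF fX _ c0] tri_eq[OF fX _ c1] simp_thms)
    qed
    have s1: "phi 1 i + phi 3 i + phi 2 i + phi 5 i = 0" for i
      by (rule circ4[of 1 3 2 5 phi]) (simp_all add: G)
    have s2: "phi 1 i + phi 4 i + phi 2 i + phi 5 i = 0" for i
      by (rule circ4[of 1 4 2 5 phi]) (simp_all add: G)
    have "phi 3 = phi 4" using bit5[OF s1 s2] by auto
    moreover have "gf2_lin_indep phi {3,4}" by (simp add: G)
    ultimately show False using gf2_pair[of phi 3 4] by simp
  next
    assume "binary (contract Q6 {0})"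
    moreover have "contract Q6 {0} = (fst Q6 - {0}, \<lambda>X. X \<subseteq> fst Q6 - {0} \<and> snd Q6 (X \<union> {0}))"
      by (rule contract_single) (simp_all add: Q6_def)
    ultimately obtain phi where H: "\<forall>X\<subseteq>fst Q6 - {0}. (X \<subseteq> fst Q6 - {0} \<and> snd Q6 (X \<union> {0})) \<longleftrightarrow> gf2_lin_indep phi X"
      unfolding binary_def by auto
    have G: "gf2_lin_indep phi X \<longleftrightarrow> (card (insert 0 X) \<le> 3 \<and> \<not> {0,1,2} \<subseteq> insert 0 X \<and> \<not> {2,3,4} \<subseteq> insert 0 X)" if "X \<subseteq> {1,2,3,4,5}" for X
    proof -
      have "X \<subseteq> fst Q6 - {0}" using that unfolding Q6_def E6 by auto
      then have a: "(X \<subseteq> fst Q6 - {0} \<and> snd Q6 (X \<union> {0})) \<longleftrightarrow> gf2_lin_indep phi X" using H by blast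
      have b: "(X \<subseteq> fst Q6 - {0} \<and> snd Q6 (X \<union> {0})) \<longleftrightarrow> (card (insert 0 X) \<le> 3 \<and> insert 0 X \<noteq> {0,1,2} \<and> insert 0 X \<noteq> {2,3,4})"
      proof -
        have "X \<subseteq> {0..5} - {0}" "X \<subseteq> {0..5}" "0 \<in> {0..5::nat}" using that by auto
        then show ?thesis by (simp add: Q6_def)
      qed
      have ab: "gf2_lin_indep phi X \<longleftrightarrow> (card (insert 0 X) \<le> 3 \<and> insert 0 X \<noteq> {0,1,2} \<and> insert 0 X \<noteq> {2,3,4})" using a b by simp
      have fX: "finite (insert 0 X)" using that finite_subset by blast
      have c0: "card {0,1,2::nat} = 3" by simp
      have c1: "card {2,3,4::nat} = 3" by simp
      show ?thesis using ab by (cases "card (insert 0 X) \<le> 3") (simp_all only: tri_eq[OF fX _ c0] tri_eq[OF fX _ c1] simp_thms)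
    qed
    have s1: "phi 1 i + phi 3 i + phi 4 i = 0" for i
      by (rule circ3[of 1 3 4 phi]) (simp_all add: G)
    have s2: "phi 1 i + phi 3 i + phi 5 i = 0" for i
      by (rule circ3[of 1 3 5 phi]) (simp_all add: G)
    have "phi 4 = phi 5" using bit3[OF s1 s2] by auto
    moreover have "gf2_lin_indep phi {4,5}" by (simp add: G)
    ultimately show False using gf2_pair[of phi 4 5] by simp
  qed
qed



lemma excl_gen:
  assumes T3: "\<forall>t\<in>T. card t = 3" and T2: "\<forall>t\<in>T. \<forall>t'\<in>T. t \<noteq> t' \<longrightarrow> card (t \<inter> t') \<le> 1"
    and chk: "\<forall>d\<in>{0,1,2,3,4,5}. \<forall>e\<in>{0,1,2,3,4,5}. d < e \<longrightarrow>
      (\<forall>X\<in>Pow ({0,1,2,3,4,5} - {d,e}). IT {0,1,2,3,4,5} T X \<longleftrightarrow> linv (W d e) X)"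
    and nZ: "\<not> in_Z ({0..5}, IT {0..5} T)"
  shows "excluded_minor_Z ({0..5}, IT {0..5} T)"
  unfolding excluded_minor_Z_def
proof (intro conjI allI impI)
  show "matroid ({0..5}, IT {0..5} T)" by (rule matroid_IT) (use T3 T2 in auto)
  show "\<not> in_Z ({0..5}, IT {0..5} T)" by fact
  fix N assume pm: "proper_minor N ({0..5}, IT {0..5} T)"
  show "in_Z N"
  proof (rule minor_in_Z[OF _ _ _ _ _ pm])
    show "finite {0..5::nat}" by simp
    show "\<And>X. IT {0..5} T X \<Longrightarrow> X \<subseteq> {0..5}" unfolding IT_def by simp
    show "\<And>X. IT {0..5} T X \<Longrightarrow> card X \<le> 3" unfolding IT_def by simp
    show "\<And>X. X \<subseteq> {0..5} \<Longrightarrow> card X \<le> 2 \<Longrightarrow> IT {0..5} T X"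
      unfolding IT_def using T3 by force
    fix d e :: nat assume "d \<in> {0..5}" "e \<in> {0..5}" "d \<noteq> e"
    then show "binary ({0..5} - {d, e}, \<lambda>X. X \<subseteq> {0..5} - {d, e} \<and> IT {0..5} T X)"
      unfolding E6 by (intro binD_from_chk[OF chk]) auto
  qed
qed

lemma U36_eq: "U36 = ({0..5}, IT {0..5} {})" unfolding U36_def IT_def by simp
lemma P6_eq: "P6 = ({0..5}, IT {0..5} {{0,1,2}})" unfolding P6_def IT_def by simp
lemma Q6_eq: "Q6 = ({0..5}, IT {0..5} {{0,1,2},{2,3,4}})" unfolding Q6_def IT_def by (simp add: conj_commute)

theorem lemma2p11:
  shows "excluded_minor_Z Q6 \<and> excluded_minor_Z P6 \<and> excluded_minor_Z U36"
proof (intro conjI)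
  show "excluded_minor_Z Q6" unfolding Q6_eq
    by (rule excl_gen[OF _ _ chk_Q6]) (use Q6_not_Z[unfolded Q6_eq] in auto)
  show "excluded_minor_Z P6" unfolding P6_eq
    by (rule excl_gen[OF _ _ chk_P6]) (use P6_not_Z[unfolded P6_eq] in auto)
  show "excluded_minor_Z U36" unfolding U36_eq
    by (rule excl_gen[OF _ _ chk_U36]) (use U36_not_Z[unfolded U36_eq] in auto)
qed


end
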